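(* For all $\lambda=(\lambda_i)_{i\in\mathbb Z},\ \mu=(\mu_i)_{i\in\mathbb Z}\in\mathbb N^n_\vartriangle$ one has $P_{\lambda,\mu}(v^2)=P'_{\lambda,\mu}(v^2)$, where $$P_{\lambda,\mu}(v^2)=\sum_{0\le\nu\le\lambda,\ \nu\in\mathbb N^n_\vartriangle} v^{2\sum_{i=1}^n\left(\frac{\nu_i^2-\nu_i}{2}+(\lambda_i-\nu_i)(\mu_i-\nu_{i-1})\right)}\prod_{i=1}^n(v^2-1)^{\nu_i}[\![\nu_i]\!]^!\left[\!\!\left[{\lambda_i\atop\nu_i}\right]\!\!\right]\left[\!\!\left[{\mu_{i+1}\atop\nu_i}\right]\!\!\right],$$ $$P'_{\lambda,\mu}(v^2)=\sum_{0\le\nu\le\lambda,\ \nu\in\mathbb N^n_\vartriangle} v^{2\sum_{i=1}^n\left(\frac{\nu_i^2-\nu_i}{2}+(\lambda_i-\nu_i)(\mu_{i+1}-\nu_{i+1})\right)}\prod_{i=1}^n(v^2-1)^{\nu_i}[\![\nu_i]\!]^!\left[\!\!\left[{\lambda_i\atop\nu_i}\right]\!\!\right]\left[\!\!\left[{\mu_i\atop\nu_i}\right]\!\!\right].$$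
   Context: $n\ge 2$ is fixed and $v$ is an indeterminate. $\mathbb N^n_\vartriangle$ is the set of sequences $\lambda=(\lambda_i)_{i\in\mathbb Z}$ of nonnegative integers with $\lambda_{i+n}=\lambda_i$ for all $i$ (so indices are read modulo $n$, e.g. $\nu_0=\nu_n$, $\mu_{n+1}=\mu_1$); $\nu\le\lambda$ means $\nu_i\le\lambda_i$ for all $i$. For integers $N\ge0$, $t\ge 0$: $[\![m]\!]=\frac{v^{2m}-1}{v^2-1}$, $[\![N]\!]^!=[\![1]\!][\![2]\!]\cdots[\![N]\!]$, and $\left[\!\left[{N\atop t}\right]\!\right]=\prod_{i=1}^t\frac{v^{2(N-i+1)}-1}{v^{2i}-1}$ (which is $0$ if $t>N$). The identity is an identity in $\mathbb Q(v)$. *)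

theory Defs
  imports Main "HOL-Computational_Algebra.Polynomial" "HOL-Computational_Algebra.Fraction_Field"
begin

definition qv :: "rat poly fract" where
  "qv = Fract [:0, 1:] 1"

definition qint :: "'a::field \<Rightarrow> nat \<Rightarrow> 'a" where
  "qint v m = (v ^ (2*m) - 1) / (v ^ 2 - 1)"

definition qfact :: "'a::field \<Rightarrow> nat \<Rightarrow> 'a" where
  "qfact v N = (\<Prod>m = 1..N. qint v m)"

text \<open>For i \<le> t the exponent N-i+1 is written N+1-i; only the factor i = N+1 (if t > N)
  can have N+1-i truncated, where it is 0 as in the paper.\<close>
definition qbinom :: "'a::field \<Rightarrow> nat \<Rightarrow> nat \<Rightarrow> 'a" where
  "qbinom v N t = (\<Prod>i = 1..t. (v ^ (2*(N + 1 - i)) - 1) / (v ^ (2*i) - 1))"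

definition periodic_seq :: "nat \<Rightarrow> (int \<Rightarrow> nat) \<Rightarrow> bool" where
  "periodic_seq n lam \<longleftrightarrow> (\<forall>i. lam (i + int n) = lam i)"

definition P_poly :: "nat \<Rightarrow> (int \<Rightarrow> nat) \<Rightarrow> (int \<Rightarrow> nat) \<Rightarrow> rat poly fract" where
  "P_poly n lam mu =
    (\<Sum>nu \<in> {nu. periodic_seq n nu \<and> (\<forall>i. nu i \<le> lam i)}.
       (qv ^ 2) powi (\<Sum>i = 1..int n.
           (int (nu i) ^ 2 - int (nu i)) div 2 + (int (lam i) - int (nu i)) * (int (mu i) - int (nu (i - 1))))
       * (\<Prod>i = 1..int n. (qv ^ 2 - 1) ^ nu i * qfact qv (nu i)
            * qbinom qv (lam i) (nu i) * qbinom qv (mu (i + 1)) (nu i)))"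

definition P'_poly :: "nat \<Rightarrow> (int \<Rightarrow> nat) \<Rightarrow> (int \<Rightarrow> nat) \<Rightarrow> rat poly fract" where
  "P'_poly n lam mu =
    (\<Sum>nu \<in> {nu. periodic_seq n nu \<and> (\<forall>i. nu i \<le> lam i)}.
       (qv ^ 2) powi (\<Sum>i = 1..int n.
           (int (nu i) ^ 2 - int (nu i)) div 2 + (int (lam i) - int (nu i)) * (int (mu (i + 1)) - int (nu (i + 1))))
       * (\<Prod>i = 1..int n. (qv ^ 2 - 1) ^ nu i * qfact qv (nu i)
            * qbinom qv (lam i) (nu i) * qbinom qv (mu i) (nu i)))"

end

theory Submission
  imports Defs "HOL-Library.FuncSet"
begin


lemma qv_pow: "qv ^ k = Fract ([:0,1:]^k) 1"
  by (induction k) (auto simp: qv_def One_fract_def)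

lemma qv_nz: "qv \<noteq> 0"
  by (simp add: qv_def Zero_fract_def eq_fract)

lemma qv_H: "0 < m \<Longrightarrow> qv ^ (2*m) \<noteq> 1"
proof
  assume m: "0 < m" and e: "qv ^ (2*m) = 1"
  have "Fract ([:0,1:]^(2*m)) 1 = Fract (1::rat poly) 1"
    using e by (simp add: qv_pow One_fract_def)
  hence "[:0,1:]^(2*m) = (1::rat poly)" by (simp add: eq_fract)
  hence "degree ([:0,1::rat:]^(2*m)) = 0" by simp
  moreover have "degree ([:0,1::rat:]^(2*m)) = 2*m" by (simp add: degree_power_eq)
  ultimately show False using m by simp
qed

definition Pq :: "'a::field \<Rightarrow> nat \<Rightarrow> 'a" where
  "Pq v N = (\<Prod>m = 1..N. v^(2*m) - 1)"

lemma pascal_alg: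
  fixes A B X Y Z :: "'a::field"
  assumes a: "A - 1 \<noteq> 0" and b: "B - 1 \<noteq> 0" and y: "Y \<noteq> 0" and z: "Z \<noteq> 0"
  shows "X * (A * B - 1) / (Y * (A - 1) * (Z * (B - 1))) = X / (Y * (Z * (B - 1))) + A * (X / (Y * (A - 1) * Z))"
proof -
  define D where "D = Y * (A - 1) * Z * (B - 1)"
  have D: "D \<noteq> 0" using assms by (simp add: D_def)
  have 1: "X / (Y * (Z * (B - 1))) = X * (A - 1) / D" using assms by (simp add: D_def)
  have 2: "A * (X / (Y * (A - 1) * Z)) = A * X * (B - 1) / D" using assms by (simp add: D_def)
  have 3: "X * (A - 1) / D + A * X * (B - 1) / D = (X * (A - 1) + A * X * (B - 1)) / D"
    by (simp add: add_divide_distrib)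
  have 4: "X * (A - 1) + A * X * (B - 1) = X * (A * B - 1)" by (simp add: algebra_simps)
  have "X / (Y * (Z * (B - 1))) + A * (X / (Y * (A - 1) * Z)) = X * (A * B - 1) / D"
    using 1 2 3 4 by simp
  then show ?thesis by (simp add: D_def mult.assoc)
qed

definition Eq :: "'a::field \<Rightarrow> 'a \<Rightarrow> nat \<Rightarrow> 'a" where
  "Eq v x k = (\<Prod>j<k. x - (v^2)^j)"

definition Nn :: "'a::field \<Rightarrow> nat \<Rightarrow> nat \<Rightarrow> nat \<Rightarrow> 'a" where
  "Nn v a b k = (v^2)^(k*(k-1) div 2) * ((v^2 - 1)^k * qfact v k * qbinom v a k * qbinom v b k)"

lemma tri_Suc: "Suc k * (Suc k - 1) div 2 = k * (k - 1) div 2 + k"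
proof -
  have "Suc k * (Suc k - 1) = k * (k - 1) + 2 * k" by (cases k) (auto simp: algebra_simps)
  then show ?thesis by simp
qed

lemma Eq_0[simp]: "Eq v x 0 = 1" by (simp add: Eq_def)
lemma Eq_Suc: "Eq v x (Suc k) = Eq v x k * (x - (v^2)^k)" by (simp add: Eq_def)
lemma Eq_zero: "a < k \<Longrightarrow> Eq v ((v^2)^a) k = 0"
  unfolding Eq_def by (auto simp: prod_zero_iff intro!: bexI[where x=a])

lemma aux_alg:
  fixes X Y t s p f b Z :: "'a::field"
  assumes "X \<noteq> 0" "Y \<noteq> 0"
  shows "(t*s)*(p*X*(f*(Y/X))*(b*(Z/Y))) = (t*(p*f*b))*(s*Z)"
  using assms by (simp add: field_simps)

locale qfield =
  fixes v :: "'a::field"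
  assumes H: "\<And>m. 0 < m \<Longrightarrow> v^(2*m) \<noteq> 1"
begin

lemma Pq_nz: "Pq v N \<noteq> 0"
  unfolding Pq_def using H by (auto simp: prod_zero_iff)

lemma Pq_Suc: "Pq v (Suc N) = Pq v N * (v^(2*Suc N) - 1)"
  unfolding Pq_def by (simp add: prod.cl_ivl_Suc)

lemma Pq_0[simp]: "Pq v 0 = 1" unfolding Pq_def by simp

lemma qb_Suc: "qbinom v N (Suc k) = qbinom v N k * ((v^(2*(N-k)) - 1) / (v^(2*Suc k) - 1))"
  unfolding qbinom_def by (simp add: prod.cl_ivl_Suc)

lemma qb_0[simp]: "qbinom v N 0 = 1" unfolding qbinom_def by simp

lemma qb_zero: "N < t \<Longrightarrow> qbinom v N t = 0"
  unfolding qbinom_def by (auto simp: prod_zero_iff intro!: bexI[where x="N+1"])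

lemma qb_Pq: "k \<le> N \<Longrightarrow> qbinom v N k * Pq v k * Pq v (N-k) = Pq v N"
proof (induction k)
  case 0 then show ?case by simp
next
  case (Suc k)
  have e: "N - k = Suc (N - Suc k)" using Suc.prems by simp
  have d: "v^(2*Suc k) - 1 \<noteq> 0" using H[of "Suc k"] by simp
  have "qbinom v N (Suc k) * Pq v (Suc k) * Pq v (N - Suc k)
      = qbinom v N k * Pq v k * (Pq v (N - Suc k) * (v^(2*(N-k)) - 1))"
    using d by (simp add: qb_Suc Pq_Suc field_simps)
  also have "Pq v (N - Suc k) * (v^(2*(N-k)) - 1) = Pq v (N - k)"
    using e by (simp add: Pq_Suc)
  finally show ?case using Suc by simp
qed

lemma qb_formula: "k \<le> N \<Longrightarrow> qbinom v N k = Pq v N / (Pq v k * Pq v (N-k))"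
  using qb_Pq[of k N] Pq_nz by (simp add: field_simps)

lemma qb_self[simp]: "qbinom v N N = 1"
  using qb_formula[of N N] Pq_nz by simp

lemma qb_M: "qbinom v N a * qbinom v (N-a) b = qbinom v N b * qbinom v (N-b) a"
proof (cases "a + b \<le> N")
  case True
  have "N - a - b = N - b - a" by simp
  then show ?thesis using True Pq_nz
    by (simp add: qb_formula field_simps)
next
  case False
  have l: "qbinom v N a * qbinom v (N-a) b = 0"
    using False by (cases "N < a") (auto simp: qb_zero)
  have r: "qbinom v N b * qbinom v (N-b) a = 0"
    using False by (cases "N < b") (auto simp: qb_zero)
  show ?thesis by (simp only: l r)
qed

lemma qb_pascal: "qbinom v (Suc b) (Suc k) = qbinom v b k + (v^2)^(Suc k) * qbinom v b (Suc k)"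
proof -
  consider "Suc k \<le> b" | "k = b" | "b < k" by linarith
  then show ?thesis
  proof cases
    case 1
    define d where "d = b - Suc k"
    have b: "b = Suc k + d" using 1 d_def by simp
    have d1: "v^(2*Suc k) - 1 \<noteq> 0" using H[of "Suc k"] by simp
    have d2: "v^(2*Suc d) - 1 \<noteq> 0" using H[of "Suc d"] by simp
    have f1: "qbinom v (Suc b) (Suc k) = Pq v b * (v^(2*Suc b) - 1) / (Pq v k * (v^(2*Suc k) - 1) * (Pq v d * (v^(2*Suc d) - 1)))"
      using 1 by (simp add: qb_formula Pq_Suc b)
    have f2: "qbinom v b k = Pq v b / (Pq v k * (Pq v d * (v^(2*Suc d) - 1)))"
      using 1 by (simp add: qb_formula Pq_Suc b)
    have f3: "qbinom v b (Suc k) = Pq v b / (Pq v k * (v^(2*Suc k) - 1) * Pq v d)"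
      using 1 by (simp add: qb_formula Pq_Suc b)
    have pw: "v^(2*Suc b) = v^(2*Suc k) * v^(2*Suc d)"
      by (simp add: b flip: power_add)
    have pw2: "(v^2)^(Suc k) = v^(2*Suc k)" by (simp only: power_mult)
    show ?thesis unfolding f1 f2 f3 pw pw2
      by (rule pascal_alg[OF d1 d2 Pq_nz Pq_nz])
  next
    case 2 then show ?thesis by (simp add: qb_zero)
  next
    case 3 then show ?thesis by (simp add: qb_zero)
  qed
qed

lemma newton: "b \<le> K \<Longrightarrow> (\<Sum>k\<le>K. qbinom v b k * Eq v x k) = x^b"
proof (induction b arbitrary: K)
  case 0
  show ?case
  proof (cases K)
    case 0 then show ?thesis by simp
  next
    case (Suc K')
    then show ?thesis by (simp add: sum.atMost_Suc_shift qb_zero del: sum.atMost_Suc)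
  qed
next
  case (Suc b)
  then obtain K' where K: "K = Suc K'" and bK: "b \<le> K'" by (cases K) auto
  let ?q = "v^2"
  have IH: "(\<Sum>k\<le>K'. qbinom v b k * Eq v x k) = x^b" using Suc.IH bK .
  have L: "(\<Sum>k\<le>K. qbinom v (Suc b) k * Eq v x k)
     = 1 + ((\<Sum>k\<le>K'. qbinom v b k * Eq v x (Suc k)) + (\<Sum>k\<le>K'. ?q^(Suc k) * qbinom v b (Suc k) * Eq v x (Suc k)))"
    unfolding K by (simp add: sum.atMost_Suc_shift qb_pascal sum.distrib algebra_simps del: sum.atMost_Suc)
  have T1: "(\<Sum>k\<le>Suc K'. ?q^k * qbinom v b k * Eq v x k) = 1 + (\<Sum>k\<le>K'. ?q^(Suc k) * qbinom v b (Suc k) * Eq v x (Suc k))"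
    by (simp add: sum.atMost_Suc_shift del: sum.atMost_Suc)
  have T2: "(\<Sum>k\<le>Suc K'. ?q^k * qbinom v b k * Eq v x k) = (\<Sum>k\<le>K'. ?q^k * qbinom v b k * Eq v x k)"
    using bK by (simp add: qb_zero)
  have "x^(Suc b) = x * (\<Sum>k\<le>K'. qbinom v b k * Eq v x k)" using IH by simp
  also have "\<dots> = (\<Sum>k\<le>K'. qbinom v b k * Eq v x (Suc k)) + (\<Sum>k\<le>K'. ?q^k * qbinom v b k * Eq v x k)"
    by (simp add: sum_distrib_left Eq_Suc sum.distrib[symmetric] algebra_simps)
  finally show ?case using L T1 T2 by simp
qed

lemma Nn_E: "(v^2)^(k*(k-1) div 2) * ((v^2-1)^k * qfact v k * qbinom v a k) = Eq v ((v^2)^a) k"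
proof (induction k)
  case 0 then show ?case by (simp add: qfact_def)
next
  case (Suc k)
  have d1: "v^2 - 1 \<noteq> 0" using H[of 1] by simp
  have d2: "v^(2*Suc k) - 1 \<noteq> 0" using H[of "Suc k"] by simp
  have qf: "qfact v (Suc k) = qfact v k * ((v^(2*Suc k) - 1) / (v^2 - 1))"
    by (simp add: qfact_def qint_def prod.cl_ivl_Suc)
  have "(v^2)^(Suc k*(Suc k-1) div 2) * ((v^2-1)^Suc k * qfact v (Suc k) * qbinom v a (Suc k))
      = ((v^2)^(k*(k-1) div 2) * ((v^2-1)^k * qfact v k * qbinom v a k)) * ((v^2)^k * (v^(2*(a-k)) - 1))"
    unfolding tri_Suc qf qb_Suc power_add power_Suc2 by (rule aux_alg[OF d1 d2])
  also have "\<dots> = Eq v ((v^2)^a) k * ((v^2)^k * (v^(2*(a-k)) - 1))" using Suc.IH by simp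
  also have "\<dots> = Eq v ((v^2)^a) (Suc k)"
  proof (cases "k \<le> a")
    case True
    have p: "v^(2*(a-k)) = (v^2)^(a-k)" by (simp only: power_mult)
    have e: "(v^2)^k * v^(2*(a-k)) = (v^2)^a"
      unfolding p power_add[symmetric] using True by simp
    have "(v^2)^k * (v^(2*(a-k)) - 1) = (v^2)^a - (v^2)^k"
      by (simp add: right_diff_distrib e)
    then show ?thesis by (simp add: Eq_Suc)
  next
    case False then show ?thesis by (simp add: Eq_zero)
  qed
  finally show ?case .
qed

lemma Nn_sum: "a \<le> K \<Longrightarrow> (\<Sum>k\<le>K. Nn v a b k) = (v^2)^(a*b)"
proof -
  assume aK: "a \<le> K"
  have "\<And>k. Nn v a b k = qbinom v a k * Eq v ((v^2)^b) k"
    by (simp add: Nn_def Nn_E[symmetric] algebra_simps)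
  then have "(\<Sum>k\<le>K. Nn v a b k) = ((v^2)^b)^a" using newton[OF aK] by simp
  then show ?thesis by (simp add: power_mult[symmetric] ac_simps)
qed

end


lemma per_k:
  assumes "periodic_seq n f"
  shows "f (j + int n * k) = f j"
proof -
  have p: "\<And>i. f (i + int n) = f i" using assms by (simp add: periodic_seq_def)
  have a: "f (j + int n * int m) = f j" for j m
    by (induction m arbitrary: j) (auto simp: algebra_simps p[of "_ + _", simplified add.assoc] dest: sym | metis add.assoc p)+
  have b: "f (j - int n * int m) = f j" for j m
  proof -
    show ?thesis using a[of "j - int n * int m" m] by simp
  qed
  show ?thesis
  proof (cases "k \<ge> 0")
    case True then show ?thesis using a[of j "nat k"] by simp
  next
    case False then show ?thesis using b[of j "nat (-k)"] by simp
  qed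
qed

definition red :: "nat \<Rightarrow> int \<Rightarrow> int" where
  "red n i = (if i mod int n = 0 then int n else i mod int n)"

lemma per_red:
  assumes "periodic_seq n f"
  shows "f (red n i) = f i"
proof -
  have "f i = f (i mod int n + int n * (i div int n))" by simp
  also have "\<dots> = f (i mod int n)" using per_k[OF assms, of "i mod int n" "i div int n"] by simp
  also have "\<dots> = f (red n i)"
  proof (cases "i mod int n = 0")
    case True
    then show ?thesis using per_k[OF assms, of 0 1] by (simp add: red_def)
  qed (simp add: red_def)
  finally show ?thesis by simp
qed

lemma red_range: "0 < n \<Longrightarrow> red n i \<in> {1..int n}"
proof -
  assume n: "0 < n"
  have h1: "0 \<le> i mod int n" and h2: "i mod int n < int n" using n by simp_all
  show ?thesis
  proof (cases "i mod int n = 0")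
    case True then show ?thesis using n by (simp add: red_def)
  next
    case False then show ?thesis using h1 h2 by (simp add: red_def)
  qed
qed

lemma red_id: "i \<in> {1..int n} \<Longrightarrow> red n i = i"
proof -
  assume i: "i \<in> {1..int n}"
  show ?thesis
  proof (cases "i = int n")
    case True then show ?thesis by (simp add: red_def)
  next
    case False
    then have "i mod int n = i" using i by (intro mod_pos_pos_trivial) auto
    then show ?thesis using i by (simp add: red_def)
  qed
qed

lemma red_add: "red n (i + int n) = red n i"
  by (simp add: red_def)

lemma periodic_red: "periodic_seq n (\<lambda>i. g (red n i))"
  by (simp add: periodic_seq_def red_add)

definition SS :: "nat \<Rightarrow> (int \<Rightarrow> nat) \<Rightarrow> (int \<Rightarrow> nat) set" where
  "SS n lam = {nu. periodic_seq n nu \<and> (\<forall>i. nu i \<le> lam i)}"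

lemma SS_bij:
  assumes n: "0 < n" and pl: "periodic_seq n lam"
  shows "bij_betw (\<lambda>nu. restrict nu {1..int n}) (SS n lam) (PiE {1..int n} (\<lambda>i. {..lam i}))"
proof (rule bij_betw_imageI)
  show "inj_on (\<lambda>nu. restrict nu {1..int n}) (SS n lam)"
  proof (rule inj_onI)
    fix a b assume a: "a \<in> SS n lam" and b: "b \<in> SS n lam"
      and e: "restrict a {1..int n} = restrict b {1..int n}"
    show "a = b"
    proof
      fix i
      have "a (red n i) = b (red n i)" using e red_range[OF n, of i]
        by (metis restrict_apply')
      then show "a i = b i" using a b per_red[of n a i] per_red[of n b i] by (auto simp: SS_def)
    qed
  qed
next
  show "(\<lambda>nu. restrict nu {1..int n}) ` SS n lam = PiE {1..int n} (\<lambda>i. {..lam i})"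
  proof
    show "(\<lambda>nu. restrict nu {1..int n}) ` SS n lam \<subseteq> PiE {1..int n} (\<lambda>i. {..lam i})"
      by (auto simp: SS_def)
  next
    show "PiE {1..int n} (\<lambda>i. {..lam i}) \<subseteq> (\<lambda>nu. restrict nu {1..int n}) ` SS n lam"
    proof
      fix g assume g: "g \<in> PiE {1..int n} (\<lambda>i. {..lam i})"
      define nu where "nu = (\<lambda>i. g (red n i))"
      have "nu \<in> SS n lam"
        unfolding SS_def
      proof (safe)
        show "periodic_seq n nu" unfolding nu_def by (rule periodic_red)
        fix i
        have "g (red n i) \<le> lam (red n i)" using g red_range[OF n, of i] by auto
        then show "nu i \<le> lam i" using per_red[OF pl] by (simp add: nu_def)
      qed
      moreover have "restrict nu {1..int n} = g"
      proof
        fix i show "restrict nu {1..int n} i = g i"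
          using g by (cases "i \<in> {1..int n}") (auto simp: nu_def red_id PiE_def extensional_def)
      qed
      ultimately show "g \<in> (\<lambda>nu. restrict nu {1..int n}) ` SS n lam" by blast
    qed
  qed
qed

lemma SS_finite:
  assumes n: "0 < n" and pl: "periodic_seq n lam"
  shows "finite (SS n lam)"
  using bij_betw_finite[OF SS_bij[OF assms]] by (simp add: finite_PiE)

lemma prod_sum_SS:
  fixes f :: "int \<Rightarrow> nat \<Rightarrow> 'a::comm_semiring_1"
  assumes n: "0 < n" and pl: "periodic_seq n lam"
  shows "(\<Prod>i\<in>{1..int n}. \<Sum>k\<le>lam i. f i k) = (\<Sum>nu\<in>SS n lam. \<Prod>i\<in>{1..int n}. f i (nu i))"
proof -
  have "(\<Prod>i\<in>{1..int n}. \<Sum>k\<le>lam i. f i k) = (\<Sum>g\<in>PiE {1..int n} (\<lambda>i. {..lam i}). \<Prod>i\<in>{1..int n}. f i (g i))"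
    by (rule prod_sum_PiE) auto
  also have "\<dots> = (\<Sum>nu\<in>SS n lam. \<Prod>i\<in>{1..int n}. f i (restrict nu {1..int n} i))"
    by (rule sum.reindex_bij_betw[OF SS_bij[OF assms], symmetric])
  also have "\<dots> = (\<Sum>nu\<in>SS n lam. \<Prod>i\<in>{1..int n}. f i (nu i))"
    by (intro sum.cong prod.cong) auto
  finally show ?thesis .
qed

lemma prod_shift:
  assumes n: "0 < n" and p: "\<And>i. h (i + int n) = (h i :: 'a::comm_monoid_mult)"
  shows "(\<Prod>i\<in>{1..int n}. h (i + 1)) = (\<Prod>i\<in>{1..int n}. h i)"
proof -
  have im: "(\<lambda>i. i + 1) ` {1..int n} = {2..int n + 1}"
    by (auto simp: image_iff)
  have "(\<Prod>i\<in>{1..int n}. h (i + 1)) = (\<Prod>i\<in>{2..int n + 1}. h i)"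
    unfolding im[symmetric] by (subst prod.reindex) (auto simp: inj_on_def)
  also have "{2..int n + 1} = insert (int n + 1) {2..int n}" using n by auto
  also have "(\<Prod>i\<in>insert (int n + 1) {2..int n}. h i) = h (int n + 1) * (\<Prod>i\<in>{2..int n}. h i)"
    by simp
  also have "h (int n + 1) = h 1" using p[of 1] by (simp add: add.commute)
  also have "h 1 * (\<Prod>i\<in>{2..int n}. h i) = (\<Prod>i\<in>insert 1 {2..int n}. h i)" by simp
  also have "insert 1 {2..int n} = {1..int n}" using n by auto
  finally show ?thesis .
qed

lemma powi_sum:
  fixes x :: "'a::field"
  assumes "x \<noteq> 0"
  shows "x powi (\<Sum>i\<in>A. e i) = (\<Prod>i\<in>A. x powi (e i))"
proof (cases "finite A")
  case True then show ?thesis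
    by (induction A rule: finite_induct) (auto simp: power_int_add assms)
qed simp

lemma prod_cong_zero:
  fixes C F G :: "'b \<Rightarrow> 'a::field"
  assumes "finite I" and "(\<forall>i\<in>I. C i \<noteq> 0) \<Longrightarrow> (\<forall>i\<in>I. F i = G i)"
  shows "(\<Prod>i\<in>I. C i * F i) = (\<Prod>i\<in>I. C i * G i)"
proof (cases "\<forall>i\<in>I. C i \<noteq> 0")
  case True then show ?thesis using assms by (intro prod.cong) auto
next
  case False
  then obtain j where j: "j \<in> I" "C j = 0" by auto
  have "(\<Prod>i\<in>I. C i * F i) = 0" "(\<Prod>i\<in>I. C i * G i) = 0"
    using j assms(1) by (auto simp: prod_zero_iff intro!: bexI[where x=j])
  then show ?thesis by simp
qed



lemma tri_int: "(int k ^ 2 - int k) div 2 = int (k * (k - 1) div 2)"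
proof -
  have "int k ^ 2 - int k = int (k * (k - 1))"
    by (cases k) (simp_all add: power2_eq_square algebra_simps)
  then show ?thesis by (simp add: zdiv_int)
qed

lemma expand:
  fixes Cf :: "int \<Rightarrow> rat poly fract" and e :: "int \<Rightarrow> int" and a b :: "int \<Rightarrow> nat"
  assumes n: "0 < n" and pl: "periodic_seq n lam"
    and hyp: "(\<forall>j\<in>{1..int n}. Cf j \<noteq> 0) \<Longrightarrow> \<forall>i\<in>{1..int n}. e i = int (nu i * (nu i - 1) div 2) + int (a i * b i) \<and> a i \<le> lam i"
  shows "(qv^2) powi (\<Sum>i\<in>{1..int n}. e i) * (\<Prod>i\<in>{1..int n}. Cf i)
    = (\<Sum>rho\<in>SS n lam. \<Prod>i\<in>{1..int n}. Cf i * (qv^2)^(nu i * (nu i - 1) div 2) * Nn qv (a i) (b i) (rho i))"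
proof -
  interpret Q: qfield qv by unfold_locales (rule qv_H)
  have q0: "qv^2 \<noteq> 0" using qv_nz by simp
  have "(qv^2) powi (\<Sum>i\<in>{1..int n}. e i) * (\<Prod>i\<in>{1..int n}. Cf i)
      = (\<Prod>i\<in>{1..int n}. Cf i * (qv^2) powi (e i))"
    by (simp add: powi_sum[OF q0] prod.distrib mult.commute)
  also have "\<dots> = (\<Prod>i\<in>{1..int n}. Cf i * ((qv^2)^(nu i * (nu i - 1) div 2) * (\<Sum>k\<le>lam i. Nn qv (a i) (b i) k)))"
  proof (rule prod_cong_zero)
    assume "\<forall>j\<in>{1..int n}. Cf j \<noteq> 0"
    note H = hyp[OF this]
    show "\<forall>i\<in>{1..int n}. (qv^2) powi (e i) = (qv^2)^(nu i * (nu i - 1) div 2) * (\<Sum>k\<le>lam i. Nn qv (a i) (b i) k)"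
    proof
      fix i assume i: "i \<in> {1..int n}"
      have E: "e i = int (nu i * (nu i - 1) div 2 + a i * b i)" and al: "a i \<le> lam i"
        using H i by auto
      have "(qv^2) powi (e i) = (qv^2)^(nu i * (nu i - 1) div 2) * (qv^2)^(a i * b i)"
        by (simp only: E power_int_of_nat power_add)
      then show "(qv^2) powi (e i) = (qv^2)^(nu i * (nu i - 1) div 2) * (\<Sum>k\<le>lam i. Nn qv (a i) (b i) k)"
        using Q.Nn_sum[OF al] by simp
    qed
  qed simp
  also have "\<dots> = (\<Prod>i\<in>{1..int n}. \<Sum>k\<le>lam i. Cf i * (qv^2)^(nu i * (nu i - 1) div 2) * Nn qv (a i) (b i) k)"
    by (simp add: sum_distrib_left mult.assoc)
  also have "\<dots> = (\<Sum>rho\<in>SS n lam. \<Prod>i\<in>{1..int n}. Cf i * (qv^2)^(nu i * (nu i - 1) div 2) * Nn qv (a i) (b i) (rho i))"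
    by (rule prod_sum_SS[OF n pl])
  finally show ?thesis .
qed

lemma final_id:
  fixes nu rho lam mu :: "int \<Rightarrow> nat"
  assumes n: "0 < n" and pm: "\<And>i. mu (i + int n) = mu i"
    and pn: "\<And>i. nu (i + int n) = nu i" and pr: "\<And>i. rho (i + int n) = rho i"
  shows "(\<Prod>i\<in>{1..int n}. ((qv^2 - 1)^nu i * qfact qv (nu i) * qbinom qv (lam i) (nu i) * qbinom qv (mu (i + 1)) (nu i))
            * (qv^2)^(nu i * (nu i - 1) div 2) * Nn qv (lam i - nu i) (mu i - nu (i - 1)) (rho i))
       = (\<Prod>i\<in>{1..int n}. ((qv^2 - 1)^rho i * qfact qv (rho i) * qbinom qv (lam i) (rho i) * qbinom qv (mu i) (rho i))
            * (qv^2)^(rho i * (rho i - 1) div 2) * Nn qv (lam i - rho i) (mu (i + 1) - rho (i + 1)) (nu i))"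
    (is "?L = ?R")
proof -
  interpret Q: qfield qv by unfold_locales (rule qv_H)
  define g where "g k = (qv^2)^(k * (k - 1) div 2) * ((qv^2 - 1)^k * qfact qv k)" for k
  define X where "X i = g (nu i) * g (rho i) * (qbinom qv (lam i) (nu i) * qbinom qv (lam i - nu i) (rho i))" for i
  define X' where "X' i = g (nu i) * g (rho i) * (qbinom qv (lam i) (rho i) * qbinom qv (lam i - rho i) (nu i))" for i
  define h1 where "h1 j = qbinom qv (mu j) (nu (j - 1))" for j
  define h2 where "h2 j = qbinom qv (mu j - rho j) (nu (j - 1))" for j
  have h1p: "h1 (j + int n) = h1 j" for j
  proof -
    have "nu (j + int n - 1) = nu (j - 1)" using pn[of "j - 1"] by (simp add: algebra_simps)
    then show ?thesis by (simp add: h1_def pm)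
  qed
  have h2p: "h2 (j + int n) = h2 j" for j
  proof -
    have "nu (j + int n - 1) = nu (j - 1)" using pn[of "j - 1"] by (simp add: algebra_simps)
    then show ?thesis by (simp add: h2_def pm pr)
  qed
  have "?L = (\<Prod>i\<in>{1..int n}. (X i * qbinom qv (mu i - nu (i - 1)) (rho i)) * h1 (i + 1))"
    by (intro prod.cong refl) (simp add: Nn_def X_def g_def h1_def ac_simps)
  also have "\<dots> = (\<Prod>i\<in>{1..int n}. X i * qbinom qv (mu i - nu (i - 1)) (rho i)) * (\<Prod>i\<in>{1..int n}. h1 (i + 1))"
    by (rule prod.distrib)
  also have "(\<Prod>i\<in>{1..int n}. h1 (i + 1)) = (\<Prod>i\<in>{1..int n}. h1 i)"
    by (rule prod_shift[where h=h1, OF n h1p])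
  also have "(\<Prod>i\<in>{1..int n}. X i * qbinom qv (mu i - nu (i - 1)) (rho i)) * (\<Prod>i\<in>{1..int n}. h1 i)
     = (\<Prod>i\<in>{1..int n}. X i * (h1 i * qbinom qv (mu i - nu (i - 1)) (rho i)))"
    by (simp add: prod.distrib[symmetric] ac_simps)
  also have "\<dots> = (\<Prod>i\<in>{1..int n}. X' i * (qbinom qv (mu i) (rho i) * h2 i))"
  proof (intro prod.cong refl)
    fix i
    have "X i = X' i" unfolding X_def X'_def using Q.qb_M by simp
    moreover have "h1 i * qbinom qv (mu i - nu (i - 1)) (rho i) = qbinom qv (mu i) (rho i) * h2 i"
      unfolding h1_def h2_def by (rule Q.qb_M)
    ultimately show "X i * (h1 i * qbinom qv (mu i - nu (i - 1)) (rho i)) = X' i * (qbinom qv (mu i) (rho i) * h2 i)"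
      by simp
  qed
  also have "\<dots> = (\<Prod>i\<in>{1..int n}. X' i * qbinom qv (mu i) (rho i)) * (\<Prod>i\<in>{1..int n}. h2 i)"
    by (simp add: prod.distrib[symmetric] ac_simps)
  also have "(\<Prod>i\<in>{1..int n}. h2 i) = (\<Prod>i\<in>{1..int n}. h2 (i + 1))"
    by (rule prod_shift[where h=h2, OF n h2p, symmetric])
  also have "(\<Prod>i\<in>{1..int n}. X' i * qbinom qv (mu i) (rho i)) * (\<Prod>i\<in>{1..int n}. h2 (i + 1)) = ?R"
    by (simp add: prod.distrib[symmetric] Nn_def X'_def g_def h2_def ac_simps)
  finally show ?thesis .
qed



theorem corollary3p9p6:
  fixes n :: nat and lam mu :: "int \<Rightarrow> nat"
  assumes "n \<ge> 2"
    and "periodic_seq n lam" and "periodic_seq n mu"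
  shows "P_poly n lam mu = P'_poly n lam mu"
proof -
  interpret Q: qfield qv by unfold_locales (rule qv_H)
  have n: "0 < n" using assms(1) by simp
  have pl: "\<And>i. lam (i + int n) = lam i" using assms(2) by (simp add: periodic_seq_def)
  have pm: "\<And>i. mu (i + int n) = mu i" using assms(3) by (simp add: periodic_seq_def)
  define L where "L nu rho = (\<Prod>i\<in>{1..int n}. ((qv^2 - 1)^nu i * qfact qv (nu i) * qbinom qv (lam i) (nu i) * qbinom qv (mu (i + 1)) (nu i))
            * (qv^2)^(nu i * (nu i - 1) div 2) * Nn qv (lam i - nu i) (mu i - nu (i - 1)) (rho i))" for nu rho
  define R where "R nu rho = (\<Prod>i\<in>{1..int n}. ((qv^2 - 1)^nu i * qfact qv (nu i) * qbinom qv (lam i) (nu i) * qbinom qv (mu i) (nu i))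
            * (qv^2)^(nu i * (nu i - 1) div 2) * Nn qv (lam i - nu i) (mu (i + 1) - nu (i + 1)) (rho i))" for nu rho
  have P1: "P_poly n lam mu = (\<Sum>nu\<in>SS n lam. \<Sum>rho\<in>SS n lam. L nu rho)"
    unfolding P_poly_def SS_def[symmetric] L_def
  proof (intro sum.cong refl expand[OF n assms(2)])
    fix nu assume nu: "nu \<in> SS n lam"
    have pn: "\<And>i. nu (i + int n) = nu i" and le: "\<And>i. nu i \<le> lam i" using nu by (auto simp: SS_def periodic_seq_def)
    assume nz: "\<forall>j\<in>{1..int n}. (qv^2 - 1)^nu j * qfact qv (nu j) * qbinom qv (lam j) (nu j) * qbinom qv (mu (j + 1)) (nu j) \<noteq> 0"
    show "\<forall>i\<in>{1..int n}. (int (nu i) ^ 2 - int (nu i)) div 2 + (int (lam i) - int (nu i)) * (int (mu i) - int (nu (i - 1)))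
            = int (nu i * (nu i - 1) div 2) + int ((lam i - nu i) * (mu i - nu (i - 1))) \<and> lam i - nu i \<le> lam i"
    proof
      fix i assume i: "i \<in> {1..int n}"
      have "nu (i - 1) \<le> mu i"
      proof (cases "i = 1")
        case True
        have "qbinom qv (mu (int n + 1)) (nu (int n)) \<noteq> 0" using nz n by auto
        then have "nu (int n) \<le> mu (int n + 1)" using Q.qb_zero by (meson not_le)
        moreover have "nu 0 = nu (int n)" using pn[of 0] by simp
        moreover have "mu (int n + 1) = mu 1" using pm[of 1] by (simp add: add.commute)
        ultimately show ?thesis using True by simp
      next
        case False
        have im: "i - 1 \<in> {1..int n}" using i False by auto
        have "qbinom qv (mu (i - 1 + 1)) (nu (i - 1)) \<noteq> 0" using nz[rule_format, OF im] by simp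
        then show ?thesis using Q.qb_zero by (metis diff_add_cancel not_le)
      qed
      then show "(int (nu i) ^ 2 - int (nu i)) div 2 + (int (lam i) - int (nu i)) * (int (mu i) - int (nu (i - 1)))
            = int (nu i * (nu i - 1) div 2) + int ((lam i - nu i) * (mu i - nu (i - 1))) \<and> lam i - nu i \<le> lam i"
        using le[of i] by (simp add: tri_int of_nat_diff)
    qed
  qed
  have P2: "P'_poly n lam mu = (\<Sum>nu\<in>SS n lam. \<Sum>rho\<in>SS n lam. R nu rho)"
    unfolding P'_poly_def SS_def[symmetric] R_def
  proof (intro sum.cong refl expand[OF n assms(2)])
    fix nu assume nu: "nu \<in> SS n lam"
    have pn: "\<And>i. nu (i + int n) = nu i" and le: "\<And>i. nu i \<le> lam i" using nu by (auto simp: SS_def periodic_seq_def)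
    assume nz: "\<forall>j\<in>{1..int n}. (qv^2 - 1)^nu j * qfact qv (nu j) * qbinom qv (lam j) (nu j) * qbinom qv (mu j) (nu j) \<noteq> 0"
    show "\<forall>i\<in>{1..int n}. (int (nu i) ^ 2 - int (nu i)) div 2 + (int (lam i) - int (nu i)) * (int (mu (i + 1)) - int (nu (i + 1)))
            = int (nu i * (nu i - 1) div 2) + int ((lam i - nu i) * (mu (i + 1) - nu (i + 1))) \<and> lam i - nu i \<le> lam i"
    proof
      fix i assume i: "i \<in> {1..int n}"
      have "nu (i + 1) \<le> mu (i + 1)"
      proof (cases "i = int n")
        case True
        have "qbinom qv (mu 1) (nu 1) \<noteq> 0" using nz n by auto
        then have "nu 1 \<le> mu 1" using Q.qb_zero by (meson not_le)
        moreover have "nu (int n + 1) = nu 1" using pn[of 1] by (simp add: add.commute)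
        moreover have "mu (int n + 1) = mu 1" using pm[of 1] by (simp add: add.commute)
        ultimately show ?thesis using True by simp
      next
        case False
        have im: "i + 1 \<in> {1..int n}" using i False by auto
        have "qbinom qv (mu (i + 1)) (nu (i + 1)) \<noteq> 0" using nz[rule_format, OF im] by simp
        then show ?thesis using Q.qb_zero by (meson not_le)
      qed
      then show "(int (nu i) ^ 2 - int (nu i)) div 2 + (int (lam i) - int (nu i)) * (int (mu (i + 1)) - int (nu (i + 1)))
            = int (nu i * (nu i - 1) div 2) + int ((lam i - nu i) * (mu (i + 1) - nu (i + 1))) \<and> lam i - nu i \<le> lam i"
        using le[of i] by (simp add: tri_int of_nat_diff)
    qed
  qed
  have LR: "L nu rho = R rho nu" if "nu \<in> SS n lam" "rho \<in> SS n lam" for nu rho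
  proof -
    have pn: "\<And>i. nu (i + int n) = nu i" and pr: "\<And>i. rho (i + int n) = rho i"
      using that by (auto simp: SS_def periodic_seq_def)
    show ?thesis unfolding L_def R_def by (rule final_id[where mu=mu and nu=nu and rho=rho, OF n pm pn pr])
  qed
  have "P_poly n lam mu = (\<Sum>nu\<in>SS n lam. \<Sum>rho\<in>SS n lam. R rho nu)"
    unfolding P1 using LR by (intro sum.cong refl) auto
  also have "\<dots> = (\<Sum>rho\<in>SS n lam. \<Sum>nu\<in>SS n lam. R rho nu)"
    by (rule sum.swap)
  also have "\<dots> = P'_poly n lam mu" using P2 by simp
  finally show ?thesis .
qed

end
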